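(* Let $(\mathcal{G},\alpha)$ be an abstract GKM graph and $p\neq q$ vertices. Set $P=\prod_{e\in\mathcal{E}_p\setminus\mathcal{E}_{pq}}\alpha(e)$, $Q=\prod_{e\in\mathcal{E}_q\setminus\mathcal{E}_{qp}}\alpha(e)$, and for $e\in\mathcal{E}_{pq}$ let $c(e)=|\{e'\in\mathcal{E}_{pq}: e'\neq e,\ \alpha(\overline{e'})=-\alpha(e')\}|$. Then for every $e\in\mathcal{E}_{pq}$, the polynomial $P-(-1)^{c(e)}Q$ is divisible by $\alpha(e)$ in $H^*(BT)$.
   Context: $H^*(BT)=\mathbb{Z}[x_1,\dots,x_r]$ with $\deg x_i=2$. Let $\mathcal{G}$ be a finite $n$-valent undirected graph (multiple edges allowed, no loops) with vertex set $\mathcal{V}$ and set of directed edges $\mathcal{E}$; for $e\in\mathcal{E}$, $\overline e$ is the reversed edge, $i(e),t(e)$ its initial and terminal vertices, $\mathcal{E}_p=\{e: i(e)=p\}$, $\mathcal{E}_{pq}=\{e: i(e)=p,\ t(e)=q\}$. An axial function $\alpha:\mathcal{E}\to H^2(BT)$ satisfies: $\alpha(\overline e)=\pm\alpha(e)$; $\alpha(e),\alpha(e')$ linearly independent over $\mathbb{Z}$ if $e\ne e'$, $i(e)=i(e')$; coefficients of each $\alpha(e)$ have gcd $1$. An abstract GKM graph is such $(\mathcal{G},\alpha)$ admitting a parallel transport, i.e. bijections $\mathcal{P}_e:\mathcal{E}_{i(e)}\to\mathcal{E}_{t(e)}$ with $\mathcal{P}_{\overline e}=\mathcal{P}_e^{-1}$,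 $\mathcal{P}_e(e)=\overline e$, $\alpha(\mathcal{P}_e(e'))-\alpha(e')\in\mathbb{Z}\alpha(e)$ for all $e'\in\mathcal{E}_{i(e)}$. *)

theory Defs
  imports Main "HOL-Library.Poly_Mapping"
begin

text \<open>H^*(BT) = Z[x_1,...,x_r] is modelled as the subring of the polynomial ring
  ((nat =>0 nat) =>0 int) in the variables with index < r (variable x_(i+1) has index i).
  Elements of H^2(BT) are integer vectors a :: nat => int with a i = 0 for i >= r,
  identified with the linear forms sum_i a i * x_i.\<close>

type_synonym mpoly = "(nat \<Rightarrow>\<^sub>0 nat) \<Rightarrow>\<^sub>0 int"

definition lin_form :: "nat \<Rightarrow> (nat \<Rightarrow> int) \<Rightarrow> mpoly" where
  "lin_form r a = (\<Sum>i<r. Poly_Mapping.single (Poly_Mapping.single i 1) (a i))"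

definition graph :: "'v set \<Rightarrow> 'e set \<Rightarrow> ('e \<Rightarrow> 'v) \<Rightarrow> ('e \<Rightarrow> 'v) \<Rightarrow> ('e \<Rightarrow> 'e) \<Rightarrow> bool" where
  "graph V E src tgt bar \<longleftrightarrow> finite V \<and> finite E \<and>
     (\<forall>e\<in>E. src e \<in> V \<and> tgt e \<in> V \<and> src e \<noteq> tgt e \<and>
        bar e \<in> E \<and> bar e \<noteq> e \<and> bar (bar e) = e \<and> src (bar e) = tgt e \<and> tgt (bar e) = src e)"

definition out_edges :: "'e set \<Rightarrow> ('e \<Rightarrow> 'v) \<Rightarrow> 'v \<Rightarrow> 'e set" where
  "out_edges E src p = {e \<in> E. src e = p}"

definition edges_between :: "'e set \<Rightarrow> ('e \<Rightarrow> 'v) \<Rightarrow> ('e \<Rightarrow> 'v) \<Rightarrow> 'v \<Rightarrow> 'v \<Rightarrow> 'e set" where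
  "edges_between E src tgt p q = {e \<in> E. src e = p \<and> tgt e = q}"

definition n_valent :: "nat \<Rightarrow> 'v set \<Rightarrow> 'e set \<Rightarrow> ('e \<Rightarrow> 'v) \<Rightarrow> bool" where
  "n_valent n V E src \<longleftrightarrow> (\<forall>p\<in>V. card (out_edges E src p) = n)"

definition Z_lin_indep2 :: "(nat \<Rightarrow> int) \<Rightarrow> (nat \<Rightarrow> int) \<Rightarrow> bool" where
  "Z_lin_indep2 a b \<longleftrightarrow> (\<forall>k l :: int. (\<forall>i. k * a i + l * b i = 0) \<longrightarrow> k = 0 \<and> l = 0)"

definition axial_function ::
  "nat \<Rightarrow> 'e set \<Rightarrow> ('e \<Rightarrow> 'v) \<Rightarrow> ('e \<Rightarrow> 'e) \<Rightarrow> ('e \<Rightarrow> nat \<Rightarrow> int) \<Rightarrow> bool" where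
  "axial_function r E src bar \<alpha> \<longleftrightarrow>
     (\<forall>e\<in>E. \<forall>i\<ge>r. \<alpha> e i = 0) \<and>
     (\<forall>e\<in>E. \<alpha> (bar e) = \<alpha> e \<or> \<alpha> (bar e) = (\<lambda>i. - \<alpha> e i)) \<and>
     (\<forall>e\<in>E. \<forall>e'\<in>E. e \<noteq> e' \<and> src e = src e' \<longrightarrow> Z_lin_indep2 (\<alpha> e) (\<alpha> e')) \<and>
     (\<forall>e\<in>E. Gcd (\<alpha> e ` {..<r}) = 1)"

definition parallel_transport ::
  "'e set \<Rightarrow> ('e \<Rightarrow> 'v) \<Rightarrow> ('e \<Rightarrow> 'v) \<Rightarrow> ('e \<Rightarrow> 'e) \<Rightarrow> ('e \<Rightarrow> nat \<Rightarrow> int) \<Rightarrow> ('e \<Rightarrow> 'e \<Rightarrow> 'e) \<Rightarrow> bool" where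
  "parallel_transport E src tgt bar \<alpha> P \<longleftrightarrow>
     (\<forall>e\<in>E. bij_betw (P e) (out_edges E src (src e)) (out_edges E src (tgt e)) \<and>
        (\<forall>e'\<in>out_edges E src (src e). P (bar e) (P e e') = e') \<and>
        P e e = bar e \<and>
        (\<forall>e'\<in>out_edges E src (src e). \<exists>k::int. \<forall>i. \<alpha> (P e e') i - \<alpha> e' i = k * \<alpha> e i))"

definition abstract_GKM_graph ::
  "nat \<Rightarrow> nat \<Rightarrow> 'v set \<Rightarrow> 'e set \<Rightarrow> ('e \<Rightarrow> 'v) \<Rightarrow> ('e \<Rightarrow> 'v) \<Rightarrow> ('e \<Rightarrow> 'e) \<Rightarrow> ('e \<Rightarrow> nat \<Rightarrow> int) \<Rightarrow> bool" where
  "abstract_GKM_graph r n V E src tgt bar \<alpha> \<longleftrightarrow>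
     graph V E src tgt bar \<and> n_valent n V E src \<and> axial_function r E src bar \<alpha> \<and>
     (\<exists>P. parallel_transport E src tgt bar \<alpha> P)"

end

theory Submission
  imports Defs "HOL-Library.Multiset"
begin


lemma single_smult: "(of_int x :: mpoly) * Poly_Mapping.single m a = Poly_Mapping.single m (x * a)"
  by (metis single_of_int mult_single add_0 of_int_eq_id id_apply)

lemma lin_comb: "lin_form r (\<lambda>i. x * v i + y * w i) = of_int x * lin_form r v + of_int y * lin_form r w"
  unfolding lin_form_def
  by (simp add: sum_distrib_left sum.distrib single_smult single_add)

lemma lin_dvd1:
  assumes "v = (\<lambda>i. w i + k * a i)"
  shows "lin_form r a dvd lin_form r v - lin_form r w"
proof -
  have "lin_form r v = of_int 1 * lin_form r w + of_int k * lin_form r a"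
    using lin_comb[of r 1 w k a] assms by simp
  thus ?thesis by simp
qed

lemma lin_dvd2:
  assumes "v = (\<lambda>i. - w i + k * a i)"
  shows "lin_form r a dvd lin_form r v + lin_form r w"
proof -
  have "lin_form r v = of_int (-1) * lin_form r w + of_int k * lin_form r a"
    using lin_comb[of r "-1" w k a] assms by simp
  thus ?thesis by simp
qed


definition Kc :: "(nat\<Rightarrow>int) \<Rightarrow> (nat\<Rightarrow>int) \<Rightarrow> (nat\<Rightarrow>int) set" where
  "Kc a v = {w. \<exists>k::int. w = (\<lambda>i. v i + k * a i) \<or> w = (\<lambda>i. - v i + k * a i)}"
definition Rp :: "(nat\<Rightarrow>int) \<Rightarrow> (nat\<Rightarrow>int) \<Rightarrow> (nat\<Rightarrow>int)" where
  "Rp a v = (SOME w. w \<in> Kc a v)"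
definition sg :: "(nat\<Rightarrow>int) \<Rightarrow> (nat\<Rightarrow>int) \<Rightarrow> int" where
  "sg a v = (if \<exists>k::int. v = (\<lambda>i. Rp a v i + k * a i) then 1 else -1)"

lemma Kc_refl: "v \<in> Kc a v"
  unfolding Kc_def by (rule CollectI, rule exI[of _ 0]) simp

lemma Kc_sym: "w \<in> Kc a v \<Longrightarrow> v \<in> Kc a w"
  unfolding Kc_def
proof (elim CollectE exE disjE)
  fix k assume "w = (\<lambda>i. v i + k * a i)"
  thus "v \<in> {w'. \<exists>k::int. w' = (\<lambda>i. w i + k * a i) \<or> w' = (\<lambda>i. - w i + k * a i)}"
    by (intro CollectI exI[of _ "-k"]) auto
next
  fix k assume "w = (\<lambda>i. - v i + k * a i)"
  thus "v \<in> {w'. \<exists>k::int. w' = (\<lambda>i. w i + k * a i) \<or> w' = (\<lambda>i. - w i + k * a i)}"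
    by (intro CollectI exI[of _ "k"]) auto
qed

lemma Kc_trans: "w \<in> Kc a v \<Longrightarrow> u \<in> Kc a w \<Longrightarrow> u \<in> Kc a v"
  unfolding Kc_def
proof (elim CollectE exE disjE)
  fix k l
  assume "w = (\<lambda>i. v i + k * a i)" "u = (\<lambda>i. w i + l * a i)"
  thus "u \<in> {w'. \<exists>k::int. w' = (\<lambda>i. v i + k * a i) \<or> w' = (\<lambda>i. - v i + k * a i)}"
    by (intro CollectI exI[of _ "k+l"]) (auto simp: algebra_simps)
next
  fix k l
  assume "w = (\<lambda>i. v i + k * a i)" "u = (\<lambda>i. - w i + l * a i)"
  thus "u \<in> {w'. \<exists>k::int. w' = (\<lambda>i. v i + k * a i) \<or> w' = (\<lambda>i. - v i + k * a i)}"
    by (intro CollectI exI[of _ "l-k"]) (auto simp: algebra_simps)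
next
  fix k l
  assume "w = (\<lambda>i. - v i + k * a i)" "u = (\<lambda>i. w i + l * a i)"
  thus "u \<in> {w'. \<exists>k::int. w' = (\<lambda>i. v i + k * a i) \<or> w' = (\<lambda>i. - v i + k * a i)}"
    by (intro CollectI exI[of _ "k+l"]) (auto simp: algebra_simps)
next
  fix k l
  assume "w = (\<lambda>i. - v i + k * a i)" "u = (\<lambda>i. - w i + l * a i)"
  thus "u \<in> {w'. \<exists>k::int. w' = (\<lambda>i. v i + k * a i) \<or> w' = (\<lambda>i. - v i + k * a i)}"
    by (intro CollectI exI[of _ "l-k"]) (auto simp: algebra_simps)
qed

lemma Kc_eq: "w \<in> Kc a v \<Longrightarrow> Kc a w = Kc a v"
  by (meson Kc_sym Kc_trans subsetI subset_antisym)

lemma Rp_in: "Rp a v \<in> Kc a v"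
  unfolding Rp_def by (metis Kc_refl someI)

lemma Rp_eq: "w \<in> Kc a v \<Longrightarrow> Rp a w = Rp a v"
  unfolding Rp_def by (simp add: Kc_eq)

lemma sg_shift:
  assumes "w = (\<lambda>i. v i + k * a i)"
  shows "sg a w = sg a v"
proof -
  have wK: "w \<in> Kc a v" using assms unfolding Kc_def by auto
  have R: "Rp a w = Rp a v" by (rule Rp_eq[OF wK])
  have "(\<exists>l::int. w = (\<lambda>i. Rp a v i + l * a i)) \<longleftrightarrow> (\<exists>l::int. v = (\<lambda>i. Rp a v i + l * a i))"
  proof
    assume "\<exists>l::int. w = (\<lambda>i. Rp a v i + l * a i)"
    then obtain l where "w = (\<lambda>i. Rp a v i + l * a i)" by blast
    with assms have "v = (\<lambda>i. Rp a v i + (l - k) * a i)"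
      by (auto simp: fun_eq_iff algebra_simps dest: fun_cong)
    thus "\<exists>l::int. v = (\<lambda>i. Rp a v i + l * a i)" by blast
  next
    assume "\<exists>l::int. v = (\<lambda>i. Rp a v i + l * a i)"
    then obtain l where "v = (\<lambda>i. Rp a v i + l * a i)" by blast
    with assms have "w = (\<lambda>i. Rp a v i + (l + k) * a i)"
      by (auto simp: fun_eq_iff algebra_simps)
    thus "\<exists>l::int. w = (\<lambda>i. Rp a v i + l * a i)" by blast
  qed
  thus ?thesis unfolding sg_def R by simp
qed

lemma Kc_shift: "w = (\<lambda>i. v i + k * a i) \<Longrightarrow> Kc a w = Kc a v"
  by (rule Kc_eq) (auto simp: Kc_def)

lemma Kc_neg: "Kc a (\<lambda>i. - v i) = Kc a v"
  by (rule Kc_eq) (auto simp: Kc_def intro!: exI[of _ 0])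

lemma sg_cong:
  "lin_form r a dvd lin_form r v - of_int (sg a v) * lin_form r (Rp a v)"
proof (cases "\<exists>k::int. v = (\<lambda>i. Rp a v i + k * a i)")
  case True
  then obtain k where "v = (\<lambda>i. Rp a v i + k * a i)" by blast
  hence "lin_form r a dvd lin_form r v - lin_form r (Rp a v)" by (rule lin_dvd1)
  thus ?thesis using True by (simp add: sg_def)
next
  case False
  have "Rp a v \<in> Kc a v" by (rule Rp_in)
  then obtain k where k: "Rp a v = (\<lambda>i. v i + k * a i) \<or> Rp a v = (\<lambda>i. - v i + k * a i)"
    unfolding Kc_def by blast
  have "Rp a v \<noteq> (\<lambda>i. v i + k * a i)"
  proof
    assume "Rp a v = (\<lambda>i. v i + k * a i)"
    hence "v = (\<lambda>i. Rp a v i + (-k) * a i)" by auto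
    thus False using False by blast
  qed
  with k have "Rp a v = (\<lambda>i. - v i + k * a i)" by blast
  hence "v = (\<lambda>i. - Rp a v i + k * a i)" by (auto simp: fun_eq_iff)
  hence "lin_form r a dvd lin_form r v + lin_form r (Rp a v)" by (rule lin_dvd2)
  thus ?thesis using False by (simp add: sg_def)
qed

lemma sg_neg:
  assumes nz: "\<forall>m::int. v \<noteq> (\<lambda>i. m * a i)" and odd: "\<exists>i. odd (a i)"
  shows "sg a (\<lambda>i. - v i) = - sg a v"
proof -
  have R: "Rp a (\<lambda>i. - v i) = Rp a v" unfolding Rp_def by (simp add: Kc_neg)
  let ?R = "Rp a v"
  have notboth: "\<not> ((\<exists>k::int. (\<lambda>i. - v i) = (\<lambda>i. ?R i + k * a i)) \<and> (\<exists>k::int. v = (\<lambda>i. ?R i + k * a i)))"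
  proof
    assume "(\<exists>k::int. (\<lambda>i. - v i) = (\<lambda>i. ?R i + k * a i)) \<and> (\<exists>k::int. v = (\<lambda>i. ?R i + k * a i))"
    then obtain k l where k: "(\<lambda>i. - v i) = (\<lambda>i. ?R i + k * a i)" and l: "v = (\<lambda>i. ?R i + l * a i)" by blast
    have two: "\<forall>i. 2 * v i = (l - k) * a i"
    proof
      fix i
      from fun_cong[OF k, of i] fun_cong[OF l, of i] show "2 * v i = (l - k) * a i"
        by (simp add: algebra_simps)
    qed
    show False
    proof (cases "even (l - k)")
      case True
      then obtain m where "l - k = 2 * m" by blast
      with two have "v = (\<lambda>i. m * a i)" by (auto simp: fun_eq_iff)
      with nz show False by blast
    next
      case False
      from odd obtain i where oi: "odd (a i)" by blast
      have "even (2 * v i)" by simp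
      hence "even ((l - k) * a i)" using two by metis
      with False oi show False by simp
    qed
  qed
  have oneof: "(\<exists>k::int. (\<lambda>i. - v i) = (\<lambda>i. ?R i + k * a i)) \<or> (\<exists>k::int. v = (\<lambda>i. ?R i + k * a i))"
  proof -
    have "?R \<in> Kc a v" by (rule Rp_in)
    then obtain k where k: "?R = (\<lambda>i. v i + k * a i) \<or> ?R = (\<lambda>i. - v i + k * a i)"
      unfolding Kc_def by blast
    thus ?thesis
    proof
      assume "?R = (\<lambda>i. v i + k * a i)"
      hence "v = (\<lambda>i. ?R i + (-k) * a i)" by auto
      thus ?thesis by blast
    next
      assume "?R = (\<lambda>i. - v i + k * a i)"
      hence "(\<lambda>i. - v i) = (\<lambda>i. ?R i + (-k) * a i)" by auto
      thus ?thesis by blast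
    qed
  qed
  show ?thesis unfolding sg_def R using notboth oneof by auto
qed



lemma prod_dvd_cong:
  fixes L :: "'a::comm_ring_1"
  assumes "finite S" "\<forall>f\<in>S. L dvd X f - Y f"
  shows "L dvd prod X S - prod Y S"
  using assms
proof (induction S rule: finite_induct)
  case empty thus ?case by simp
next
  case (insert x F)
  have eq: "prod X (insert x F) - prod Y (insert x F)
     = X x * (prod X F - prod Y F) + (X x - Y x) * prod Y F"
    using insert.hyps by (simp add: algebra_simps)
  have "L dvd prod X F - prod Y F" using insert by auto
  moreover have "L dvd X x - Y x" using insert by auto
  ultimately show ?case unfolding eq by (simp add: dvd_add dvd_mult dvd_mult2)
qed

theorem lemma4p1:
  fixes r n :: nat and V :: "'v set" and E :: "'e set"
    and src tgt :: "'e \<Rightarrow> 'v" and bar :: "'e \<Rightarrow> 'e" and \<alpha> :: "'e \<Rightarrow> nat \<Rightarrow> int"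
    and p q :: 'v and e :: 'e
  assumes "abstract_GKM_graph r n V E src tgt bar \<alpha>"
    and "p \<in> V" and "q \<in> V" and "p \<noteq> q"
    and "e \<in> edges_between E src tgt p q"
  shows "lin_form r (\<alpha> e) dvd
     ((\<Prod>f \<in> out_edges E src p - edges_between E src tgt p q. lin_form r (\<alpha> f))
      - (-1) ^ card {f \<in> edges_between E src tgt p q. f \<noteq> e \<and> \<alpha> (bar f) = (\<lambda>i. - \<alpha> f i)}
        * (\<Prod>f \<in> out_edges E src q - edges_between E src tgt q p. lin_form r (\<alpha> f)))"
proof -
  from assms(1) have G: "graph V E src tgt bar" and AX: "axial_function r E src bar \<alpha>"
    and "\<exists>P. parallel_transport E src tgt bar \<alpha> P"
    unfolding abstract_GKM_graph_def by auto
  then obtain Pt where PT: "parallel_transport E src tgt bar \<alpha> Pt" by blast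
  define a where "a = \<alpha> e"
  define L where "L = lin_form r a"
  define Ep where "Ep = out_edges E src p"
  define Eq where "Eq = out_edges E src q"
  define Epq where "Epq = edges_between E src tgt p q"
  define Eqp where "Eqp = edges_between E src tgt q p"
  define A where "A = Ep - Epq"
  define B where "B = Eq - Eqp"
  define C where "C = Epq - {e}"
  define C' where "C' = Eqp - {bar e}"
  define c where "c = card {f \<in> Epq. f \<noteq> e \<and> \<alpha> (bar f) = (\<lambda>i. - \<alpha> f i)}"
  define key where "key f = Kc a (\<alpha> f)" for f
  define F where "F S = lin_form r (SOME w. w \<in> S)" for S
  define s where "s f = sg a (\<alpha> f)" for f
  define t :: "'e \<Rightarrow> int" where "t f = (if \<alpha> (bar f) = (\<lambda>i. - \<alpha> f i) then -1 else 1)" for f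
  have finE: "finite E" using G unfolding graph_def by auto
  have eE: "e \<in> E" and sp: "src e = p" and tq: "tgt e = q"
    using assms(5) unfolding edges_between_def by auto
  have barE: "\<And>f. f \<in> E \<Longrightarrow> bar f \<in> E \<and> bar (bar f) = f \<and> src (bar f) = tgt f \<and> tgt (bar f) = src f \<and> src f \<noteq> tgt f"
    using G unfolding graph_def by auto
  have barsign: "\<And>f. f \<in> E \<Longrightarrow> \<alpha> (bar f) = \<alpha> f \<or> \<alpha> (bar f) = (\<lambda>i. - \<alpha> f i)"
    using AX unfolding axial_function_def by auto
  have indep: "\<And>f g. f \<in> E \<Longrightarrow> g \<in> E \<Longrightarrow> f \<noteq> g \<Longrightarrow> src f = src g \<Longrightarrow> Z_lin_indep2 (\<alpha> f) (\<alpha> g)"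
    using AX unfolding axial_function_def by auto
  have "Gcd (\<alpha> e ` {..<r}) = 1" using AX eE unfolding axial_function_def by auto
  hence oddex: "\<exists>i. odd (a i)"
  proof -
    assume g: "Gcd (\<alpha> e ` {..<r}) = 1"
    show ?thesis
    proof (rule ccontr)
      assume "\<not> (\<exists>i. odd (a i))"
      hence "\<forall>x\<in>\<alpha> e ` {..<r}. 2 dvd x" unfolding a_def by auto
      hence "2 dvd Gcd (\<alpha> e ` {..<r})" by (intro Gcd_greatest) blast
      with g show False by simp
    qed
  qed
  have bareE: "bar e \<in> E" "src (bar e) = q" using barE[OF eE] sp tq by auto
  have nzp: "\<And>f m. f \<in> Ep - {e} \<Longrightarrow> \<alpha> f \<noteq> (\<lambda>i. m * a i)"
  proof
    fix f m assume f: "f \<in> Ep - {e}" and eq: "\<alpha> f = (\<lambda>i. m * a i)"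
    have I: "Z_lin_indep2 (\<alpha> e) (\<alpha> f)" using f eE sp by (intro indep) (auto simp: Ep_def out_edges_def)
    have H: "\<forall>i. m * \<alpha> e i + (-1) * \<alpha> f i = 0" using eq by (simp add: a_def)
    from I[unfolded Z_lin_indep2_def, THEN spec, THEN spec, THEN mp, OF H] show False by simp
  qed
  have nzq: "\<And>f m. f \<in> Eq - {bar e} \<Longrightarrow> \<alpha> f \<noteq> (\<lambda>i. m * a i)"
  proof
    fix f m assume f: "f \<in> Eq - {bar e}" and eq: "\<alpha> f = (\<lambda>i. m * a i)"
    have I: "Z_lin_indep2 (\<alpha> (bar e)) (\<alpha> f)" using f bareE by (intro indep) (auto simp: Eq_def out_edges_def)
    from barsign[OF eE] show False
    proof
      assume "\<alpha> (bar e) = \<alpha> e"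
      hence H: "\<forall>i. m * \<alpha> (bar e) i + (-1) * \<alpha> f i = 0" using eq by (simp add: a_def)
      from I[unfolded Z_lin_indep2_def, THEN spec, THEN spec, THEN mp, OF H] show False by simp
    next
      assume "\<alpha> (bar e) = (\<lambda>i. - \<alpha> e i)"
      hence H: "\<forall>i. (-m) * \<alpha> (bar e) i + (-1) * \<alpha> f i = 0" using eq by (simp add: a_def)
      from I[unfolded Z_lin_indep2_def, THEN spec, THEN spec, THEN mp, OF H] show False by simp
    qed
  qed
  have bijPt: "bij_betw (Pt e) Ep Eq" and Pte: "Pt e e = bar e"
    and shiftPt: "\<forall>f\<in>Ep. \<exists>k::int. \<forall>i. \<alpha> (Pt e f) i - \<alpha> f i = k * a i"
    using PT eE sp tq unfolding parallel_transport_def Ep_def Eq_def a_def by auto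
  have bij2: "bij_betw (Pt e) (Ep - {e}) (Eq - {bar e})"
    using bijPt Pte eE sp bareE
    by (intro bij_betw_DiffI) (auto simp: bij_betw_def Ep_def Eq_def out_edges_def)
  have shift2: "\<And>f. f \<in> Ep \<Longrightarrow> \<exists>k::int. \<alpha> (Pt e f) = (\<lambda>i. \<alpha> f i + k * a i)"
  proof -
    fix f assume "f \<in> Ep"
    then obtain k::int where "\<forall>i. \<alpha> (Pt e f) i - \<alpha> f i = k * a i" using shiftPt by blast
    hence "\<alpha> (Pt e f) = (\<lambda>i. \<alpha> f i + k * a i)" by (auto simp: fun_eq_iff algebra_simps)
    thus "\<exists>k::int. \<alpha> (Pt e f) = (\<lambda>i. \<alpha> f i + k * a i)" by blast
  qed
  have keyPt: "\<And>f. f \<in> Ep \<Longrightarrow> key (Pt e f) = key f"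
    using shift2 unfolding key_def by (metis Kc_shift)
  have sPt: "\<And>f. f \<in> Ep \<Longrightarrow> s (Pt e f) = s f"
    using shift2 unfolding s_def by (metis sg_shift)
  have finEp: "finite Ep" and finEq: "finite Eq" using finE by (auto simp: Ep_def Eq_def out_edges_def)
  have finA: "finite A" and finB: "finite B" and finC: "finite C" and finC': "finite C'"
    using finEp finEq finE by (auto simp: A_def B_def C_def C'_def Epq_def Eqp_def edges_between_def)
  have decp: "Ep - {e} = A \<union> C" and disp: "A \<inter> C = {}"
    using eE sp tq by (auto simp: A_def C_def Ep_def Epq_def out_edges_def edges_between_def)
  have decq: "Eq - {bar e} = B \<union> C'" and disq: "B \<inter> C' = {}"
    using eE sp tq barE[OF eE] by (auto simp: B_def C'_def Eq_def Eqp_def out_edges_def edges_between_def)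
  have CE: "C \<subseteq> E" by (auto simp: C_def Epq_def edges_between_def)
  have barinj: "\<And>x y. x \<in> E \<Longrightarrow> y \<in> E \<Longrightarrow> bar x = bar y \<Longrightarrow> x = y"
  proof -
    fix x y assume x: "x \<in> E" and y: "y \<in> E" and h: "bar x = bar y"
    have "x = bar (bar x)" using barE[OF x] by simp
    also have "\<dots> = bar (bar y)" using h by simp
    also have "\<dots> = y" using barE[OF y] by simp
    finally show "x = y" .
  qed
  have injbar: "inj_on bar C" using CE barinj by (intro inj_onI) blast
  have C'img: "C' = bar ` C"
  proof
    show "bar ` C \<subseteq> C'"
      using barE eE barinj[OF _ eE] by (auto simp: C_def C'_def Epq_def Eqp_def edges_between_def)
  next
    show "C' \<subseteq> bar ` C"
    proof
      fix f assume f: "f \<in> C'"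
      hence fE: "f \<in> E" by (auto simp: C'_def Eqp_def edges_between_def)
      have "bar f \<in> C" using f barE[OF fE] barE[OF eE]
        by (auto simp: C_def C'_def Epq_def Eqp_def edges_between_def)
      moreover have "f = bar (bar f)" using barE[OF fE] by simp
      ultimately show "f \<in> bar ` C" by blast
    qed
  qed
  have CsubEp: "C \<subseteq> Ep - {e}" using decp by auto
  have ASub: "A \<subseteq> Ep - {e}" using decp by auto
  have BSub: "B \<subseteq> Eq - {bar e}" using decq by auto
  have nmF: "\<And>f. lin_form r (Rp a (\<alpha> f)) = F (key f)" unfolding F_def key_def Rp_def by simp
  have cong1: "\<And>S. finite S \<Longrightarrow> L dvd (\<Prod>f\<in>S. lin_form r (\<alpha> f)) - of_int (prod s S) * (\<Prod>f\<in>S. F (key f))"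
  proof -
    fix S :: "'e set" assume fS: "finite S"
    have "L dvd (\<Prod>f\<in>S. lin_form r (\<alpha> f)) - (\<Prod>f\<in>S. of_int (s f) * F (key f))"
      using fS by (intro prod_dvd_cong) (auto simp: L_def s_def sg_cong nmF[symmetric])
    thus "L dvd (\<Prod>f\<in>S. lin_form r (\<alpha> f)) - of_int (prod s S) * (\<Prod>f\<in>S. F (key f))"
      by (simp add: prod.distrib of_int_prod)
  qed
  have m1: "image_mset key (mset_set (Ep - {e})) = image_mset key (mset_set (Eq - {bar e}))"
  proof -
    have "mset_set (Eq - {bar e}) = image_mset (Pt e) (mset_set (Ep - {e}))"
      using bij2 by (simp add: image_mset_mset_set bij_betw_def)
    hence "image_mset key (mset_set (Eq - {bar e})) = image_mset (key \<circ> Pt e) (mset_set (Ep - {e}))"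
      by (simp add: multiset.map_comp)
    also have "\<dots> = image_mset key (mset_set (Ep - {e}))"
      using finEp by (intro image_mset_cong) (auto simp: keyPt)
    finally show ?thesis by simp
  qed
  have keybar: "\<And>f. f \<in> C \<Longrightarrow> key (bar f) = key f"
    using barsign CE unfolding key_def by (metis Kc_neg subsetD)
  have mC': "image_mset key (mset_set C') = image_mset key (mset_set C)"
  proof -
    have "image_mset key (mset_set C') = image_mset key (image_mset bar (mset_set C))"
      using injbar C'img by (simp add: image_mset_mset_set)
    also have "\<dots> = image_mset (key \<circ> bar) (mset_set C)" by (simp add: multiset.map_comp)
    also have "\<dots> = image_mset key (mset_set C)"
      using finC by (intro image_mset_cong) (simp add: keybar)
    finally show ?thesis .
  qed
  have mAB: "image_mset key (mset_set A) = image_mset key (mset_set B)"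
  proof -
    have "image_mset key (mset_set A) + image_mset key (mset_set C)
        = image_mset key (mset_set B) + image_mset key (mset_set C')"
      using m1 unfolding decp decq
      by (simp add: mset_set_Union finA finB finC finC' disp disq)
    thus ?thesis unfolding mC' by simp
  qed
  have GAB: "(\<Prod>f\<in>A. F (key f)) = (\<Prod>f\<in>B. F (key f))"
  proof -
    have "(\<Prod>f\<in>A. F (key f)) = prod_mset (image_mset F (image_mset key (mset_set A)))"
      by (simp add: prod_unfold_prod_mset multiset.map_comp comp_def)
    also have "\<dots> = prod_mset (image_mset F (image_mset key (mset_set B)))" by (simp only: mAB)
    also have "\<dots> = (\<Prod>f\<in>B. F (key f))"
      by (simp add: prod_unfold_prod_mset multiset.map_comp comp_def)
    finally show ?thesis .
  qed
  have s1: "prod s (Ep - {e}) = prod s (Eq - {bar e})"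
  proof -
    have "prod (\<lambda>f. s (Pt e f)) (Ep - {e}) = prod s (Eq - {bar e})"
      by (rule prod.reindex_bij_betw[OF bij2])
    moreover have "prod (\<lambda>f. s (Pt e f)) (Ep - {e}) = prod s (Ep - {e})"
      by (intro prod.cong) (auto simp: sPt)
    ultimately show ?thesis by simp
  qed
  have sbar: "\<And>f. f \<in> C \<Longrightarrow> s (bar f) = t f * s f"
  proof -
    fix f assume fC: "f \<in> C"
    have nz: "\<forall>m. \<alpha> f \<noteq> (\<lambda>i. m * a i)" using nzp CsubEp fC by blast
    have bs: "\<alpha> (bar f) = \<alpha> f \<or> \<alpha> (bar f) = (\<lambda>i. - \<alpha> f i)" using barsign fC CE by blast
    thus "s (bar f) = t f * s f"
    proof
      assume h: "\<alpha> (bar f) = (\<lambda>i. - \<alpha> f i)"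
      thus ?thesis unfolding s_def t_def using sg_neg[OF nz oddex] by simp
    next
      assume h: "\<alpha> (bar f) = \<alpha> f"
      have "\<alpha> (bar f) \<noteq> (\<lambda>i. - \<alpha> f i)"
      proof
        assume "\<alpha> (bar f) = (\<lambda>i. - \<alpha> f i)"
        with h have "\<alpha> f = (\<lambda>i. 0 * a i)" by (auto simp: fun_eq_iff dest: fun_cong)
        with nz show False by blast
      qed
      thus ?thesis unfolding s_def t_def using h by simp
    qed
  qed
  have tprod: "prod t C = (-1) ^ c"
  proof -
    have "prod t C = prod (\<lambda>_. -1) (C \<inter> {f. \<alpha> (bar f) = (\<lambda>i. - \<alpha> f i)})
          * prod (\<lambda>_. 1) (C \<inter> - {f. \<alpha> (bar f) = (\<lambda>i. - \<alpha> f i)})"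
      unfolding t_def by (rule prod.If_cases[OF finC])
    also have "\<dots> = (-1) ^ card (C \<inter> {f. \<alpha> (bar f) = (\<lambda>i. - \<alpha> f i)})" by simp
    also have "C \<inter> {f. \<alpha> (bar f) = (\<lambda>i. - \<alpha> f i)} = {f \<in> Epq. f \<noteq> e \<and> \<alpha> (bar f) = (\<lambda>i. - \<alpha> f i)}"
      by (auto simp: C_def)
    finally show ?thesis unfolding c_def .
  qed
  have sC': "prod s C' = (-1) ^ c * prod s C"
  proof -
    have "prod s C' = prod (s \<circ> bar) C" unfolding C'img by (rule prod.reindex[OF injbar])
    also have "\<dots> = prod (\<lambda>f. t f * s f) C" by (intro prod.cong) (auto simp: sbar)
    also have "\<dots> = prod t C * prod s C" by (simp add: prod.distrib)
    finally show ?thesis using tprod by simp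
  qed
  have sunit: "\<And>f. s f = 1 \<or> s f = -1" unfolding s_def sg_def by auto
  have sCnz: "prod s C \<noteq> 0"
  proof -
    have "\<And>f. s f \<noteq> 0" using sunit by (metis zero_neq_neg_one zero_neq_one)
    thus ?thesis using finC by (simp add: prod_zero_iff)
  qed
  have sAB: "prod s A = (-1) ^ c * prod s B"
  proof -
    have "prod s A * prod s C = prod s B * prod s C'"
      using s1 unfolding decp decq
      by (simp add: prod.union_disjoint finA finB finC finC' disp disq)
    hence "prod s A * prod s C = ((-1) ^ c * prod s B) * prod s C" unfolding sC' by (simp add: mult_ac)
    thus ?thesis using sCnz mult_right_cancel by blast
  qed
  define GG where "GG = (\<Prod>f\<in>A. F (key f))"
  define PP where "PP = (\<Prod>f\<in>A. lin_form r (\<alpha> f))"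
  define QQ where "QQ = (\<Prod>f\<in>B. lin_form r (\<alpha> f))"
  have dP: "L dvd PP - of_int (prod s A) * GG" unfolding PP_def GG_def by (rule cong1[OF finA])
  have dQ: "L dvd QQ - of_int (prod s B) * GG" unfolding QQ_def GG_def GAB by (rule cong1[OF finB])
  have eq: "PP - (-1) ^ c * QQ = (PP - of_int (prod s A) * GG) - (-1) ^ c * (QQ - of_int (prod s B) * GG)"
    unfolding sAB by (simp add: algebra_simps)
  have "L dvd PP - (-1) ^ c * QQ" unfolding eq using dP dQ by (simp add: dvd_diff dvd_mult)
  thus ?thesis unfolding L_def a_def PP_def QQ_def A_def B_def c_def Ep_def Epq_def Eq_def Eqp_def .
qed

end
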